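(* Let $k\ge2$, let $f:(k+1)^V\to\mathbb{R}_{\ge0}$ be non-negative, monotone and $k$-submodular with multilinear extension $F$, and let $OPT=\max_{S\in(k+1)^V}f(S)$. Run the meta-framework with $\delta=1/N$ where, at every iteration $t$ and for every $i\in[n]$, $v_{i,j_i(t)}(t)=1$ and $v_{i,j}(t)=0$ for $j\neq j_i(t)$, with $j_i(t)\in\arg\max_{j\in[k]}\frac{\partial F}{\partial x_{i,j}}(s(t))$ (ties broken arbitrarily). Then $s(N)\in\mathcal P$, in fact $\sum_{j}s_{i,j}(N)=1$ for every $i$, and for every $\varepsilon>0$ there is $N_0$ such that for all $N\ge N_0$, $F(s(N))\ge\frac12 OPT-\varepsilon$.
   Context: Let $V=[n]=\{1,\dots,n\}$ and let $k\ge 1$ be an integer. Write $(k+1)^V$ for the set of $k$-tuples $S=(S_1,\dots,S_k)$ of pairwise disjoint subsets of $V$. For $S,T\in(k+1)^V$ let $S\sqcap T=(S_1\cap T_1,\dots,S_k\cap T_k)$ and let $S\sqcup T$ be the tuple whose $j$-th component is $(S_j\cup T_j)\setminus\bigcup_{l\neq j}(S_l\cup T_l)$. A function $f:(k+1)^V\to\mathbb{R}$ is $k$-submodular if $f(S)+f(T)\ge f(S\sqcap T)+f(S\sqcup T)$ for all $S,T\in(k+1)^V$. Write $S\preceq T$ if $S_j\subseteq T_j$ for all $j$; $f$ is monotone if $S\preceq T$ implies $f(S)\le f(T)$. Let $\mathcal P=\{x\in[0,1]^{n\times k}:\sum_{j=1}^k x_{i,j}\le 1\ \forall i\in[n]\}$.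 The multilinear extension of $f$ is the polynomial $F(x)=\sum_{S\in(k+1)^V} f(S_1,\dots,S_k)\Big(\prod_{j\in[k]}\prod_{i\in S_j}x_{i,j}\Big)\prod_{i\in V\setminus\bigcup_j S_j}\Big(1-\sum_{j=1}^k x_{i,j}\Big)$, considered on $\mathcal P$. Meta-framework: fix a positive integer $N$ and $\delta=1/N$. Set $s(0)=0\in\mathbb{R}^{n\times k}$. For $t=0,1,\dots,N-1$, choose a direction $v(t)\in[0,1]^{n\times k}$ with $\sum_{j=1}^k v_{i,j}(t)=1$ for every $i\in[n]$, and set $s(t+1)=s(t)+\delta\,v(t)$. The output is $s(N)$. *)

theory Defs
  imports "HOL-Analysis.Analysis"
begin

text \<open>Ground set V = {1..n}; labels j range over {1..k}.
  A k-tuple S = (S_1,...,S_k) is a function nat => nat set, with S j = {} for j outside {1..k}.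
  A point x of R^{n x k} is a function nat => nat => real, entry x i j.\<close>

definition ksets :: "nat \<Rightarrow> nat \<Rightarrow> (nat \<Rightarrow> nat set) set" where
  "ksets n k = {S. (\<forall>j\<in>{1..k}. S j \<subseteq> {1..n}) \<and> (\<forall>j. j \<notin> {1..k} \<longrightarrow> S j = {})
      \<and> (\<forall>j\<in>{1..k}. \<forall>l\<in>{1..k}. j \<noteq> l \<longrightarrow> S j \<inter> S l = {})}"

definition kmeet :: "(nat \<Rightarrow> nat set) \<Rightarrow> (nat \<Rightarrow> nat set) \<Rightarrow> nat \<Rightarrow> nat set" where
  "kmeet S T = (\<lambda>j. S j \<inter> T j)"

definition kjoin :: "nat \<Rightarrow> (nat \<Rightarrow> nat set) \<Rightarrow> (nat \<Rightarrow> nat set) \<Rightarrow> nat \<Rightarrow> nat set" where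
  "kjoin k S T = (\<lambda>j. if j \<in> {1..k} then
      (S j \<union> T j) - (\<Union>l\<in>{1..k} - {j}. S l \<union> T l) else {})"

definition k_submodular :: "nat \<Rightarrow> nat \<Rightarrow> ((nat \<Rightarrow> nat set) \<Rightarrow> real) \<Rightarrow> bool" where
  "k_submodular n k f \<longleftrightarrow> (\<forall>S\<in>ksets n k. \<forall>T\<in>ksets n k.
      f S + f T \<ge> f (kmeet S T) + f (kjoin k S T))"

definition kpreceq :: "nat \<Rightarrow> (nat \<Rightarrow> nat set) \<Rightarrow> (nat \<Rightarrow> nat set) \<Rightarrow> bool" where
  "kpreceq k S T \<longleftrightarrow> (\<forall>j\<in>{1..k}. S j \<subseteq> T j)"

definition k_monotone :: "nat \<Rightarrow> nat \<Rightarrow> ((nat \<Rightarrow> nat set) \<Rightarrow> real) \<Rightarrow> bool" where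
  "k_monotone n k f \<longleftrightarrow> (\<forall>S\<in>ksets n k. \<forall>T\<in>ksets n k. kpreceq k S T \<longrightarrow> f S \<le> f T)"

definition polytopeP :: "nat \<Rightarrow> nat \<Rightarrow> (nat \<Rightarrow> nat \<Rightarrow> real) set" where
  "polytopeP n k = {x. (\<forall>i\<in>{1..n}. \<forall>j\<in>{1..k}. 0 \<le> x i j \<and> x i j \<le> 1)
      \<and> (\<forall>i\<in>{1..n}. (\<Sum>j=1..k. x i j) \<le> 1)}"

definition multilinear_ext :: "nat \<Rightarrow> nat \<Rightarrow> ((nat \<Rightarrow> nat set) \<Rightarrow> real) \<Rightarrow> (nat \<Rightarrow> nat \<Rightarrow> real) \<Rightarrow> real" where
  "multilinear_ext n k f x = (\<Sum>S\<in>ksets n k. f S *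
      (\<Prod>j\<in>{1..k}. \<Prod>i\<in>S j. x i j) *
      (\<Prod>i\<in>{1..n} - (\<Union>j\<in>{1..k}. S j). 1 - (\<Sum>j=1..k. x i j)))"

definition partial :: "((nat \<Rightarrow> nat \<Rightarrow> real) \<Rightarrow> real) \<Rightarrow> nat \<Rightarrow> nat \<Rightarrow> (nat \<Rightarrow> nat \<Rightarrow> real) \<Rightarrow> real" where
  "partial G i j x = deriv (\<lambda>t. G (x(i := (x i)(j := t)))) (x i j)"

definition greedy_run :: "nat \<Rightarrow> nat \<Rightarrow> ((nat \<Rightarrow> nat set) \<Rightarrow> real) \<Rightarrow> nat
    \<Rightarrow> (nat \<Rightarrow> nat \<Rightarrow> nat) \<Rightarrow> (nat \<Rightarrow> nat \<Rightarrow> nat \<Rightarrow> real) \<Rightarrow> bool" where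
  "greedy_run n k f N J s \<longleftrightarrow>
     s 0 = (\<lambda>i j. 0) \<and>
     (\<forall>t<N. s (Suc t) = (\<lambda>i j. s t i j + (1 / real N) * (if j = J t i then 1 else 0))) \<and>
     (\<forall>t<N. \<forall>i\<in>{1..n}. J t i \<in> {1..k} \<and>
        (\<forall>j\<in>{1..k}. partial (multilinear_ext n k f) i j (s t)
                      \<le> partial (multilinear_ext n k f) i (J t i) (s t)))"

end

theory Submission
  imports Defs
begin


definition wr :: "nat \<Rightarrow> (nat \<Rightarrow> real) \<Rightarrow> nat \<Rightarrow> real" where
  "wr k r c = (if c = 0 then 1 - (\<Sum>j=1..k. r j) else r c)"

fun EE :: "nat \<Rightarrow> nat \<Rightarrow> ((nat\<Rightarrow>nat) \<Rightarrow> real) \<Rightarrow> (nat\<Rightarrow>nat\<Rightarrow>real) \<Rightarrow> real" where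
  "EE k 0 g x = g (\<lambda>_. 0)"
| "EE k (Suc m) g x = (\<Sum>c=0..k. wr k (x (Suc m)) c * EE k m (\<lambda>\<sigma>. g (\<sigma>(Suc m := c))) x)"

lemma wr_sum: "(\<Sum>c=0..k. wr k r c) = 1"
proof -
  have "{0..k} = insert 0 {1..k}" by auto
  then have "(\<Sum>c=0..k. wr k r c) = wr k r 0 + (\<Sum>c=1..k. wr k r c)" by simp
  also have "(\<Sum>c=1..k. wr k r c) = (\<Sum>c=1..k. r c)" by (rule sum.cong) (auto simp: wr_def)
  finally show ?thesis by (simp add: wr_def)
qed

lemma EE_lin: "EE k m (\<lambda>\<sigma>. a * g \<sigma> + b * h \<sigma>) x = a * EE k m g x + b * EE k m h x"
proof (induction m arbitrary: g h)
  case 0 then show ?case by simp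
next
  case (Suc m)
  show ?case by (simp add: Suc sum.distrib sum_distrib_left algebra_simps)
qed

lemma EE_diff: "EE k m (\<lambda>\<sigma>. g \<sigma> - h \<sigma>) x = EE k m g x - EE k m h x"
  using EE_lin[of k m 1 g "-1" h x] by simp

lemma EE_const: "EE k m (\<lambda>_. a) x = a"
  by (induction m) (simp_all add: sum_distrib_right[symmetric] wr_sum)

definition nonneg :: "nat \<Rightarrow> nat \<Rightarrow> (nat\<Rightarrow>nat\<Rightarrow>real) \<Rightarrow> bool" where
  "nonneg k m x \<longleftrightarrow> (\<forall>l\<in>{1..m}. \<forall>c\<in>{0..k}. wr k (x l) c \<ge> 0)"

lemma EE_mono: "nonneg k m x \<Longrightarrow> (\<And>\<sigma>. g \<sigma> \<le> h \<sigma>) \<Longrightarrow> EE k m g x \<le> EE k m h x"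
proof (induction m arbitrary: g h)
  case 0 then show ?case by simp
next
  case (Suc m)
  have nn: "nonneg k m x" using Suc.prems(1) by (auto simp: nonneg_def)
  show ?case unfolding EE.simps
  proof (rule sum_mono)
    fix c assume c: "c \<in> {0..k}"
    have "wr k (x (Suc m)) c \<ge> 0" using Suc.prems(1) c by (auto simp: nonneg_def)
    moreover have "EE k m (\<lambda>\<sigma>. g (\<sigma>(Suc m := c))) x \<le> EE k m (\<lambda>\<sigma>. h (\<sigma>(Suc m := c))) x"
      by (rule Suc.IH[OF nn]) (rule Suc.prems(2))
    ultimately show "wr k (x (Suc m)) c * EE k m (\<lambda>\<sigma>. g (\<sigma>(Suc m := c))) x
         \<le> wr k (x (Suc m)) c * EE k m (\<lambda>\<sigma>. h (\<sigma>(Suc m := c))) x"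
      by (rule mult_left_mono[rotated])
  qed
qed

lemma EE_local: "(\<And>l j. l \<in> {1..m} \<Longrightarrow> j \<in> {1..k} \<Longrightarrow> x l j = y l j) \<Longrightarrow> EE k m g x = EE k m g y"
proof (induction m arbitrary: g)
  case 0 then show ?case by simp
next
  case (Suc m)
  have w: "wr k (x (Suc m)) c = wr k (y (Suc m)) c" if "c \<in> {0..k}" for c
    using Suc.prems that by (auto simp: wr_def intro!: sum.cong)
  have e: "EE k m g' x = EE k m g' y" for g'
    by (rule Suc.IH) (use Suc.prems in auto)
  show ?case unfolding EE.simps by (rule sum.cong) (auto simp: w e)
qed


lemma EE_indep: "i \<in> {1..m} \<Longrightarrow> (\<And>\<sigma> c. g (\<sigma>(i := c)) = g \<sigma>) \<Longrightarrow> EE k m g (x(i := r)) = EE k m g x"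
proof (induction m arbitrary: g)
  case 0 then show ?case by simp
next
  case (Suc m)
  show ?case
  proof (cases "i = Suc m")
    case True
    have l: "EE k m g' (x(Suc m := r)) = EE k m g' x" for g'
      by (rule EE_local) (use True in auto)
    have gg: "(\<lambda>\<sigma>. g (\<sigma>(Suc m := c))) = g" for c
    proof
      fix \<sigma> have "g (\<sigma>(i:=c)) = g \<sigma>" by (rule Suc.prems(2))
      then show "g (\<sigma>(Suc m := c)) = g \<sigma>" using True by simp
    qed
    have "EE k (Suc m) g (x(i := r)) = (\<Sum>c=0..k. wr k r c * EE k m g x)"
      unfolding EE.simps gg using True by (simp add: l)
    also have "\<dots> = EE k m g x" by (simp add: sum_distrib_right[symmetric] wr_sum)
    also have "\<dots> = EE k (Suc m) g x"
      unfolding EE.simps gg by (simp add: sum_distrib_right[symmetric] wr_sum)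
    finally show ?thesis .
  next
    case False
    then have i: "i \<in> {1..m}" using Suc.prems(1) by auto
    have ih: "EE k m (\<lambda>\<sigma>. g (\<sigma>(Suc m := c))) (x(i := r)) = EE k m (\<lambda>\<sigma>. g (\<sigma>(Suc m := c))) x" for c
    proof (rule Suc.IH[OF i])
      fix \<sigma> c'
      have "\<sigma>(i := c', Suc m := c) = \<sigma>(Suc m := c, i := c')" using False by (rule fun_upd_twist)
      then show "g (\<sigma>(i := c', Suc m := c)) = g (\<sigma>(Suc m := c))" using Suc.prems(2) by metis
    qed
    have xs: "(x(i:=r)) (Suc m) = x (Suc m)" using False by simp
    show ?thesis by (simp only: EE.simps xs ih)
  qed
qed

lemma EE_row: "i \<in> {1..m} \<Longrightarrow> EE k m g x = (\<Sum>c=0..k. wr k (x i) c * EE k m (\<lambda>\<sigma>. g (\<sigma>(i := c))) x)"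
proof (induction m arbitrary: g)
  case 0 then show ?case by simp
next
  case (Suc m)
  show ?case
  proof (cases "i = Suc m")
    case True
    have h: "EE k (Suc m) (\<lambda>\<sigma>. g (\<sigma>(Suc m := c))) x = EE k m (\<lambda>\<sigma>. g (\<sigma>(Suc m := c))) x" for c
    proof -
      have "EE k (Suc m) (\<lambda>\<sigma>. g (\<sigma>(Suc m := c))) x = (\<Sum>ca=0..k. wr k (x (Suc m)) ca * EE k m (\<lambda>\<sigma>. g (\<sigma>(Suc m := ca, Suc m := c))) x)"
        by (simp only: EE.simps)
      also have "\<dots> = (\<Sum>ca=0..k. wr k (x (Suc m)) ca * EE k m (\<lambda>\<sigma>. g (\<sigma>(Suc m := c))) x)"
        by (simp only: fun_upd_upd)
      also have "\<dots> = EE k m (\<lambda>\<sigma>. g (\<sigma>(Suc m := c))) x" by (simp add: sum_distrib_right[symmetric] wr_sum)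
      finally show ?thesis .
    qed
    show ?thesis unfolding True h by (simp only: EE.simps)
  next
    case False
    then have i: "i \<in> {1..m}" using Suc.prems(1) by auto
    have "EE k (Suc m) g x = (\<Sum>c=0..k. wr k (x (Suc m)) c *
        (\<Sum>c'=0..k. wr k (x i) c' * EE k m (\<lambda>\<sigma>. g (\<sigma>(i := c', Suc m := c))) x))"
    proof -
      have ih: "EE k m (\<lambda>\<sigma>. g (\<sigma>(Suc m := c))) x = (\<Sum>c'=0..k. wr k (x i) c' * EE k m (\<lambda>\<sigma>. g (\<sigma>(i := c', Suc m := c))) x)" for c
        by (rule Suc.IH[OF i])
      show ?thesis by (simp only: EE.simps ih)
    qed
    also have "\<dots> = (\<Sum>c'=0..k. wr k (x i) c' * (\<Sum>c=0..k. wr k (x (Suc m)) c *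
         EE k m (\<lambda>\<sigma>. g (\<sigma>(i := c', Suc m := c))) x))"
      unfolding sum_distrib_left by (rule trans[OF sum.swap]) (simp add: mult.left_commute)
    also have "\<dots> = (\<Sum>c'=0..k. wr k (x i) c' * EE k (Suc m) (\<lambda>\<sigma>. g (\<sigma>(i := c'))) x)"
      by (simp only: EE.simps fun_upd_twist[OF False])
    finally show ?thesis .
  qed
qed

definition pt :: "(nat \<Rightarrow> nat) \<Rightarrow> nat \<Rightarrow> nat \<Rightarrow> real" where
  "pt \<sigma> = (\<lambda>i j. if j = \<sigma> i \<and> j \<noteq> 0 then 1 else 0)"

lemma wr_pt: "\<sigma> l \<in> {0..k} \<Longrightarrow> c \<in> {0..k} \<Longrightarrow> wr k (pt \<sigma> l) c = (if c = \<sigma> l then 1 else 0)"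
  by (cases "\<sigma> l = 0") (auto simp: wr_def pt_def sum.delta)

lemma EE_pt: "(\<And>l. l \<in> {1..m} \<Longrightarrow> \<sigma> l \<in> {0..k}) \<Longrightarrow>
   EE k m g (pt \<sigma>) = g (\<lambda>l. if l \<in> {1..m} then \<sigma> l else 0)"
proof (induction m arbitrary: g)
  case 0 then show ?case by simp
next
  case (Suc m)
  have s: "\<sigma> (Suc m) \<in> {0..k}" using Suc.prems by auto
  have "EE k (Suc m) g (pt \<sigma>) = (\<Sum>c=0..k. (if c = \<sigma> (Suc m) then EE k m (\<lambda>\<tau>. g (\<tau>(Suc m := c))) (pt \<sigma>) else 0))"
    unfolding EE.simps by (rule sum.cong) (simp_all add: wr_pt[of \<sigma> "Suc m" k, OF s])
  also have "\<dots> = EE k m (\<lambda>\<tau>. g (\<tau>(Suc m := \<sigma> (Suc m)))) (pt \<sigma>)"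
    using s by (simp add: sum.delta)
  finally have "EE k (Suc m) g (pt \<sigma>) = EE k m (\<lambda>\<tau>. g (\<tau>(Suc m := \<sigma> (Suc m)))) (pt \<sigma>)" .
  also have "\<dots> = g ((\<lambda>l. if l \<in> {1..m} then \<sigma> l else 0)(Suc m := \<sigma> (Suc m)))"
    by (rule Suc.IH) (use Suc.prems in auto)
  also have "(\<lambda>l. if l \<in> {1..m} then \<sigma> l else 0)(Suc m := \<sigma> (Suc m)) = (\<lambda>l. if l \<in> {1..Suc m} then \<sigma> l else 0)"
    by (auto simp: fun_eq_iff)
  finally show ?case .
qed


definition toS :: "nat \<Rightarrow> nat \<Rightarrow> (nat \<Rightarrow> nat) \<Rightarrow> nat \<Rightarrow> nat set" where
  "toS n k \<sigma> = (\<lambda>j. if j \<in> {1..k} then {l \<in> {1..n}. \<sigma> l = j} else {})"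

definition Asg :: "nat \<Rightarrow> nat \<Rightarrow> (nat \<Rightarrow> nat) set" where
  "Asg m k = {\<sigma>. (\<forall>l\<in>{1..m}. \<sigma> l \<in> {0..k}) \<and> (\<forall>l. l \<notin> {1..m} \<longrightarrow> \<sigma> l = 0)}"

lemma toS_ksets: "toS n k \<sigma> \<in> ksets n k"
  by (auto simp: toS_def ksets_def)

lemma Asg_0: "Asg 0 k = {\<lambda>_. 0}"
  by (auto simp: Asg_def)

lemma Asg_Suc: "Asg (Suc m) k = (\<lambda>(c,\<sigma>). \<sigma>(Suc m := c)) ` ({0..k} \<times> Asg m k)"
proof
  show "Asg (Suc m) k \<subseteq> (\<lambda>(c,\<sigma>). \<sigma>(Suc m := c)) ` ({0..k} \<times> Asg m k)"
  proof
    fix \<tau> assume t: "\<tau> \<in> Asg (Suc m) k"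
    have "\<tau> = (\<lambda>(c,\<sigma>). \<sigma>(Suc m := c)) (\<tau> (Suc m), \<tau>(Suc m := 0))" by simp
    moreover have "(\<tau> (Suc m), \<tau>(Suc m := 0)) \<in> {0..k} \<times> Asg m k"
      using t by (auto simp: Asg_def)
    ultimately show "\<tau> \<in> (\<lambda>(c,\<sigma>). \<sigma>(Suc m := c)) ` ({0..k} \<times> Asg m k)" by blast
  qed
  show "(\<lambda>(c,\<sigma>). \<sigma>(Suc m := c)) ` ({0..k} \<times> Asg m k) \<subseteq> Asg (Suc m) k"
    by (auto simp: Asg_def)
qed

lemma Asg_inj: "inj_on (\<lambda>(c,\<sigma>). \<sigma>(Suc m := c)) ({0..k} \<times> Asg m k)"
proof (rule inj_onI, clarify)
  fix c1 s1 c2 s2 assume a: "s1 \<in> Asg m k" "s2 \<in> Asg m k" "s1(Suc m := c1) = s2(Suc m := c2)"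
  have "c1 = c2" using fun_cong[OF a(3), of "Suc m"] by simp
  moreover have "s1 = s2"
  proof
    fix l show "s1 l = s2 l"
    proof (cases "l = Suc m")
      case True then show ?thesis using a(1,2) by (auto simp: Asg_def)
    next
      case False then show ?thesis using fun_cong[OF a(3), of l] by simp
    qed
  qed
  ultimately show "c1 = c2 \<and> s1 = s2" by simp
qed

lemma Asg_finite: "finite (Asg m k)"
  by (induction m) (simp_all add: Asg_0 Asg_Suc)

lemma EE_sum: "EE k m g x = (\<Sum>\<sigma>\<in>Asg m k. g \<sigma> * (\<Prod>l\<in>{1..m}. wr k (x l) (\<sigma> l)))"
proof (induction m arbitrary: g)
  case 0 then show ?case by (simp add: Asg_0)
next
  case (Suc m)
  have pr: "(\<Prod>l\<in>{1..Suc m}. wr k (x l) ((\<sigma>(Suc m := c)) l)) = wr k (x (Suc m)) c * (\<Prod>l\<in>{1..m}. wr k (x l) (\<sigma> l))" for \<sigma> c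
  proof -
    have "{1..Suc m} = insert (Suc m) {1..m}" by auto
    then have "(\<Prod>l\<in>{1..Suc m}. wr k (x l) ((\<sigma>(Suc m := c)) l)) = wr k (x (Suc m)) c * (\<Prod>l\<in>{1..m}. wr k (x l) ((\<sigma>(Suc m := c)) l))"
      by simp
    also have "(\<Prod>l\<in>{1..m}. wr k (x l) ((\<sigma>(Suc m := c)) l)) = (\<Prod>l\<in>{1..m}. wr k (x l) (\<sigma> l))"
      by (rule prod.cong) auto
    finally show ?thesis .
  qed
  have "(\<Sum>\<tau>\<in>Asg (Suc m) k. g \<tau> * (\<Prod>l\<in>{1..Suc m}. wr k (x l) (\<tau> l)))
     = (\<Sum>p\<in>{0..k} \<times> Asg m k. (\<lambda>\<tau>. g \<tau> * (\<Prod>l\<in>{1..Suc m}. wr k (x l) (\<tau> l))) ((\<lambda>(c,\<sigma>). \<sigma>(Suc m := c)) p))"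
    unfolding Asg_Suc by (subst sum.reindex[OF Asg_inj]) (simp add: o_def)
  also have "\<dots> = (\<Sum>c\<in>{0..k}. \<Sum>\<sigma>\<in>Asg m k. g (\<sigma>(Suc m := c)) * (wr k (x (Suc m)) c * (\<Prod>l\<in>{1..m}. wr k (x l) (\<sigma> l))))"
    by (simp add: sum.cartesian_product pr split_def ac_simps)
  also have "\<dots> = (\<Sum>c=0..k. wr k (x (Suc m)) c * (\<Sum>\<sigma>\<in>Asg m k. g (\<sigma>(Suc m := c)) * (\<Prod>l\<in>{1..m}. wr k (x l) (\<sigma> l))))"
    by (simp add: sum_distrib_left mult.left_commute)
  also have "\<dots> = EE k (Suc m) g x"
    by (simp only: EE.simps Suc.IH)
  finally show ?case by simp
qed

lemma toS_bij: "bij_betw (toS n k) (Asg n k) (ksets n k)"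
proof (rule bij_betwI')
  fix s1 s2 assume a: "s1 \<in> Asg n k" "s2 \<in> Asg n k"
  show "(toS n k s1 = toS n k s2) = (s1 = s2)"
  proof
    assume e: "toS n k s1 = toS n k s2"
    show "s1 = s2"
    proof
      fix l show "s1 l = s2 l"
      proof (cases "l \<in> {1..n}")
        case False then show ?thesis using a by (auto simp: Asg_def)
      next
        case True
        have h: "s1 l = j \<longleftrightarrow> s2 l = j" if "j \<in> {1..k}" for j
          using fun_cong[OF e, of j] that True by (auto simp: toS_def)
        show ?thesis
        proof (cases "s1 l = 0")
          case True
          then show ?thesis using h[of "s2 l"] a \<open>l \<in> {1..n}\<close> by (auto simp: Asg_def)
        next
          case False
          then show ?thesis using h[of "s1 l"] a \<open>l \<in> {1..n}\<close> by (auto simp: Asg_def)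
        qed
      qed
    qed
  qed simp
next
  fix \<sigma> show "toS n k \<sigma> \<in> ksets n k" by (rule toS_ksets)
next
  fix S assume S: "S \<in> ksets n k"
  have S1: "S j \<subseteq> {1..n}" if "j \<in> {1..k}" for j using S that unfolding ksets_def mem_Collect_eq by blast
  have S2: "S j = {}" if "j \<notin> {1..k}" for j using S that unfolding ksets_def mem_Collect_eq by blast
  have S3: "S j \<inter> S l = {}" if "j \<in> {1..k}" "l \<in> {1..k}" "j \<noteq> l" for j l
    using S that unfolding ksets_def mem_Collect_eq by blast
  define \<sigma> where "\<sigma> = (\<lambda>l. if l \<in> {1..n} \<and> (\<exists>j\<in>{1..k}. l \<in> S j) then (THE j. j \<in> {1..k} \<and> l \<in> S j) else 0)"
  have th: "\<sigma> l = j" if "j \<in> {1..k}" "l \<in> S j" for l j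
  proof -
    have ln: "l \<in> {1..n}" using S1[OF that(1)] that(2) by blast
    have "(THE j. j \<in> {1..k} \<and> l \<in> S j) = j"
    proof (rule the_equality)
      show "j \<in> {1..k} \<and> l \<in> S j" using that by simp
      fix j' assume "j' \<in> {1..k} \<and> l \<in> S j'"
      then have j': "j' \<in> {1..k}" "l \<in> S j'" by auto
      show "j' = j"
      proof (rule ccontr)
        assume "j' \<noteq> j"
        then have "S j' \<inter> S j = {}" using S3 j'(1) that(1) by blast
        then show False using j'(2) that(2) by blast
      qed
    qed
    then show ?thesis using that ln by (auto simp: \<sigma>_def)
  qed
  have "\<sigma> \<in> Asg n k"
  proof -
    have "\<sigma> l \<in> {0..k}" for l
    proof (cases "l \<in> {1..n} \<and> (\<exists>j\<in>{1..k}. l \<in> S j)")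
      case True
      then obtain j where "j \<in> {1..k}" "l \<in> S j" by blast
      with th[OF this] show ?thesis by simp
    qed (auto simp: \<sigma>_def)
    moreover have "\<sigma> l = 0" if "l \<notin> {1..n}" for l using that by (auto simp: \<sigma>_def)
    ultimately show ?thesis unfolding Asg_def by blast
  qed
  moreover have "S = toS n k \<sigma>"
  proof
    fix j show "S j = toS n k \<sigma> j"
    proof (cases "j \<in> {1..k}")
      case False
      have "S j = {}" using S2[OF False] .
      then show ?thesis unfolding toS_def by (simp only: if_not_P[OF False])
    next
      case True
      have "l \<in> S j" if "l \<in> {1..n}" "\<sigma> l = j" for l
      proof -
        have "l \<in> {1..n} \<and> (\<exists>j\<in>{1..k}. l \<in> S j)"
        proof (rule ccontr)
          assume "\<not> (l \<in> {1..n} \<and> (\<exists>j\<in>{1..k}. l \<in> S j))"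
          then have "\<sigma> l = 0" unfolding \<sigma>_def by (rule if_not_P)
          then show False using that True by simp
        qed
        then obtain j' where "j' \<in> {1..k}" "l \<in> S j'" by blast
        moreover from th[OF this] that(2) have "j' = j" by simp
        ultimately show ?thesis by simp
      qed
      moreover have "l \<in> {1..n} \<and> \<sigma> l = j" if "l \<in> S j" for l
      proof
        show "l \<in> {1..n}" using S1[OF True] that by blast
        show "\<sigma> l = j" using th[OF True that] .
      qed
      moreover have "toS n k \<sigma> j = {l\<in>{1..n}. \<sigma> l = j}" unfolding toS_def by (simp only: if_P[OF True])
      ultimately show ?thesis by blast
    qed
  qed
  ultimately show "\<exists>\<sigma>\<in>Asg n k. S = toS n k \<sigma>" by blast
qed


lemma prod_match:
  assumes s: "\<sigma> \<in> Asg n k"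
  shows "(\<Prod>j\<in>{1..k}. \<Prod>i\<in>toS n k \<sigma> j. x i j) *
         (\<Prod>i\<in>{1..n} - (\<Union>j\<in>{1..k}. toS n k \<sigma> j). 1 - (\<Sum>j=1..k. x i j))
       = (\<Prod>l\<in>{1..n}. wr k (x l) (\<sigma> l))"
proof -
  define U where "U = {l\<in>{1..n}. \<sigma> l \<noteq> 0}"
  have sk: "\<sigma> l \<le> k" if "l \<in> {1..n}" for l using s that by (auto simp: Asg_def)
  have h1: "(\<Union>j\<in>{1..k}. toS n k \<sigma> j) = U"
    using sk by (auto simp: toS_def U_def)
  have h2: "(\<Prod>j\<in>{1..k}. \<Prod>i\<in>toS n k \<sigma> j. x i j) = (\<Prod>i\<in>U. x i (\<sigma> i))"
  proof -
    have "(\<Prod>j\<in>{1..k}. \<Prod>i\<in>toS n k \<sigma> j. x i j) = (\<Prod>j\<in>{1..k}. \<Prod>i\<in>{l\<in>U. \<sigma> l = j}. x i (\<sigma> i))"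
    proof (rule prod.cong[OF refl])
      fix j assume j: "j \<in> {1..k}"
      have "toS n k \<sigma> j = {l\<in>U. \<sigma> l = j}" using j by (auto simp: toS_def U_def)
      show "(\<Prod>i\<in>toS n k \<sigma> j. x i j) = (\<Prod>i\<in>{l\<in>U. \<sigma> l = j}. x i (\<sigma> i))"
        unfolding \<open>toS n k \<sigma> j = {l\<in>U. \<sigma> l = j}\<close> by (rule prod.cong[OF refl]) simp
    qed
    also have "\<dots> = (\<Prod>i\<in>U. x i (\<sigma> i))"
      by (rule prod.group) (use sk in \<open>auto simp: U_def\<close>)
    finally show ?thesis .
  qed
  have h3: "(\<Prod>i\<in>{1..n} - U. 1 - (\<Sum>j=1..k. x i j)) = (\<Prod>l\<in>{1..n} - U. wr k (x l) (\<sigma> l))"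
    by (rule prod.cong) (auto simp: U_def wr_def)
  have h4: "(\<Prod>i\<in>U. x i (\<sigma> i)) = (\<Prod>l\<in>U. wr k (x l) (\<sigma> l))"
    by (rule prod.cong) (auto simp: U_def wr_def)
  have "(\<Prod>l\<in>{1..n}. wr k (x l) (\<sigma> l)) = (\<Prod>l\<in>{1..n} - U. wr k (x l) (\<sigma> l)) * (\<Prod>l\<in>U. wr k (x l) (\<sigma> l))"
    by (rule prod.subset_diff) (auto simp: U_def)
  then show ?thesis unfolding h1 h2 h3 h4 by (simp add: mult.commute)
qed

lemma ml_EE: "multilinear_ext n k f x = EE k n (\<lambda>\<sigma>. f (toS n k \<sigma>)) x"
proof -
  have "multilinear_ext n k f x = (\<Sum>\<sigma>\<in>Asg n k. f (toS n k \<sigma>) *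
      (\<Prod>j\<in>{1..k}. \<Prod>i\<in>toS n k \<sigma> j. x i j) *
      (\<Prod>i\<in>{1..n} - (\<Union>j\<in>{1..k}. toS n k \<sigma> j). 1 - (\<Sum>j=1..k. x i j)))"
    unfolding multilinear_ext_def by (rule sum.reindex_bij_betw[OF toS_bij, symmetric])
  also have "\<dots> = (\<Sum>\<sigma>\<in>Asg n k. f (toS n k \<sigma>) * (\<Prod>l\<in>{1..n}. wr k (x l) (\<sigma> l)))"
    by (rule sum.cong[OF refl], subst mult.assoc, subst prod_match, auto)
  also have "\<dots> = EE k n (\<lambda>\<sigma>. f (toS n k \<sigma>)) x" by (simp add: EE_sum)
  finally show ?thesis .
qed




lemma wr_sum_split: "(\<Sum>c=0..k. wr k r c * A c) = A 0 + (\<Sum>j=1..k. r j * (A j - A 0))"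
proof -
  have "{0..k} = insert 0 {1..k}" by auto
  then have "(\<Sum>c=0..k. wr k r c * A c) = wr k r 0 * A 0 + (\<Sum>c=1..k. wr k r c * A c)" by simp
  also have "(\<Sum>c=1..k. wr k r c * A c) = (\<Sum>c=1..k. r c * A c)" by (rule sum.cong) (auto simp: wr_def)
  finally have e: "(\<Sum>c=0..k. wr k r c * A c) = wr k r 0 * A 0 + (\<Sum>c=1..k. r c * A c)" .
  have f: "(\<Sum>j=1..k. r j * (A j - A 0)) = (\<Sum>j=1..k. r j * A j) - (\<Sum>j=1..k. r j) * A 0"
    by (simp add: right_diff_distrib sum_subtractf sum_distrib_right)
  have g: "wr k r 0 = 1 - (\<Sum>j=1..k. r j)" by (simp add: wr_def)
  show ?thesis unfolding e f g by (simp add: algebra_simps)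
qed

lemma EE_affine:
  assumes i: "i \<in> {1..m}"
  shows "EE k m G (x(i := r)) = EE k m (\<lambda>\<sigma>. G (\<sigma>(i := 0))) x
      + (\<Sum>j=1..k. r j * EE k m (\<lambda>\<sigma>. G (\<sigma>(i := j)) - G (\<sigma>(i := 0))) x)"
proof -
  have "EE k m G (x(i := r)) = (\<Sum>c=0..k. wr k r c * EE k m (\<lambda>\<sigma>. G (\<sigma>(i := c))) (x(i := r)))"
    using EE_row[OF i, of k G "x(i := r)"] by simp
  also have "\<dots> = (\<Sum>c=0..k. wr k r c * EE k m (\<lambda>\<sigma>. G (\<sigma>(i := c))) x)"
    by (rule sum.cong[OF refl]) (subst EE_indep[OF i], auto)
  also have "\<dots> = EE k m (\<lambda>\<sigma>. G (\<sigma>(i := 0))) x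
      + (\<Sum>j=1..k. r j * (EE k m (\<lambda>\<sigma>. G (\<sigma>(i := j))) x - EE k m (\<lambda>\<sigma>. G (\<sigma>(i := 0))) x))"
    by (rule wr_sum_split)
  finally show ?thesis by (simp add: EE_diff)
qed

lemma EE_affine_diff:
  assumes i: "i \<in> {1..m}"
  shows "EE k m G (x(i := r)) - EE k m G (x(i := r')) =
     (\<Sum>j=1..k. (r j - r' j) * EE k m (\<lambda>\<sigma>. G (\<sigma>(i := j)) - G (\<sigma>(i := 0))) x)"
  unfolding EE_affine[OF i] by (simp add: sum_subtractf left_diff_distrib)

definition filling :: "nat \<Rightarrow> nat \<Rightarrow> ((nat \<Rightarrow> nat) \<Rightarrow> real) \<Rightarrow> bool" where
  "filling n k G \<longleftrightarrow> (\<forall>\<sigma> l c. l \<in> {1..n} \<longrightarrow> c \<in> {1..k} \<longrightarrow> G (\<sigma>(l := c)) \<le> G (\<sigma>(l := 0)))"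

lemma EE_single:
  assumes G: "filling n k G" and x: "nonneg k n x" and l: "l \<in> {1..n}" and c: "c \<in> {1..k}" and d: "d \<ge> 0"
  shows "EE k n G (x(l := (x l)(c := x l c + d))) \<le> EE k n G x"
proof -
  have "EE k n G (x(l := (x l)(c := x l c + d))) - EE k n G (x(l := x l)) =
     (\<Sum>j=1..k. (((x l)(c := x l c + d)) j - x l j) * EE k n (\<lambda>\<sigma>. G (\<sigma>(l := j)) - G (\<sigma>(l := 0))) x)"
    by (rule EE_affine_diff[OF l])
  also have "\<dots> = (\<Sum>j=1..k. (if j = c then d * EE k n (\<lambda>\<sigma>. G (\<sigma>(l := j)) - G (\<sigma>(l := 0))) x else 0))"
    by (rule sum.cong) auto
  also have "\<dots> = d * EE k n (\<lambda>\<sigma>. G (\<sigma>(l := c)) - G (\<sigma>(l := 0))) x"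
    using c by (simp add: sum.delta)
  also have "\<dots> \<le> 0"
  proof -
    have "EE k n (\<lambda>\<sigma>. G (\<sigma>(l := c)) - G (\<sigma>(l := 0))) x \<le> EE k n (\<lambda>_. 0) x"
      by (rule EE_mono[OF x]) (use G l c in \<open>auto simp: filling_def\<close>)
    then show ?thesis using d by (simp add: EE_const mult_nonneg_nonpos)
  qed
  finally show ?thesis by simp
qed

lemma nonneg_iff: "nonneg k n x \<longleftrightarrow> (\<forall>l\<in>{1..n}. (\<forall>c\<in>{1..k}. x l c \<ge> 0) \<and> (\<Sum>j=1..k. x l j) \<le> 1)"
proof -
  have "(\<forall>c\<in>{0..k}. wr k (x l) c \<ge> 0) \<longleftrightarrow> (\<forall>c\<in>{1..k}. x l c \<ge> 0) \<and> (\<Sum>j=1..k. x l j) \<le> 1" for l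
  proof
    assume a: "\<forall>c\<in>{0..k}. wr k (x l) c \<ge> 0"
    show "(\<forall>c\<in>{1..k}. x l c \<ge> 0) \<and> (\<Sum>j=1..k. x l j) \<le> 1"
    proof
      show "\<forall>c\<in>{1..k}. x l c \<ge> 0"
      proof
        fix c assume "c \<in> {1..k}" then show "x l c \<ge> 0" using a[rule_format, of c] by (simp add: wr_def)
      qed
      show "(\<Sum>j=1..k. x l j) \<le> 1" using a[rule_format, of 0] by (simp add: wr_def)
    qed
  next
    assume "(\<forall>c\<in>{1..k}. x l c \<ge> 0) \<and> (\<Sum>j=1..k. x l j) \<le> 1"
    then show "\<forall>c\<in>{0..k}. wr k (x l) c \<ge> 0" by (auto simp: wr_def)
  qed
  then show ?thesis unfolding nonneg_def by blast
qed

lemma EE_antimono: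
  assumes G: "filling n k G" and x: "nonneg k n x" and y: "nonneg k n y"
    and le: "\<And>l c. l \<in> {1..n} \<Longrightarrow> c \<in> {1..k} \<Longrightarrow> x l c \<le> y l c"
  shows "EE k n G y \<le> EE k n G x"
proof -
  define z where "z A = (\<lambda>l c. if (l, c) \<in> A then y l c else x l c)" for A
  have zn: "nonneg k n (z A)" if "A \<subseteq> {1..n} \<times> {1..k}" for A
    unfolding nonneg_iff
  proof
    fix l assume l: "l \<in> {1..n}"
    have xl: "\<forall>c\<in>{1..k}. x l c \<ge> 0" using x l by (simp add: nonneg_iff)
    have yl: "(\<Sum>j=1..k. y l j) \<le> 1" using y l by (simp add: nonneg_iff)
    have "(\<Sum>j=1..k. z A l j) \<le> (\<Sum>j=1..k. y l j)"
      by (rule sum_mono) (use le l in \<open>auto simp: z_def\<close>)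
    moreover have "\<forall>c\<in>{1..k}. z A l c \<ge> 0"
    proof
      fix c assume c: "c \<in> {1..k}"
      have "x l c \<ge> 0" using xl c by blast
      moreover have "x l c \<le> y l c" using le l c by blast
      ultimately show "z A l c \<ge> 0" by (simp add: z_def)
    qed
    ultimately show "(\<forall>c\<in>{1..k}. z A l c \<ge> 0) \<and> (\<Sum>j=1..k. z A l j) \<le> 1" using yl by simp
  qed
  have main: "A \<subseteq> {1..n} \<times> {1..k} \<Longrightarrow> EE k n G (z A) \<le> EE k n G x" if "finite A" for A
    using that
  proof (induction A rule: finite_induct)
    case empty
    have "z {} = x" by (simp add: z_def)
    then show ?case by simp
  next
    case (insert a A)
    obtain l c where a: "a = (l, c)" by (cases a)
    have lc: "l \<in> {1..n}" "c \<in> {1..k}" using insert.prems a by auto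
    have zA: "z A l c = x l c" using insert.hyps(2) a by (simp add: z_def)
    have eq: "z (insert a A) = (z A)(l := (z A l)(c := z A l c + (y l c - x l c)))"
      using a zA by (auto simp: z_def fun_eq_iff)
    have zAn: "nonneg k n (z A)" using zn insert.prems by blast
    have dn: "y l c - x l c \<ge> 0" using le[OF lc] by simp
    have "EE k n G (z (insert a A)) \<le> EE k n G (z A)"
      unfolding eq by (rule EE_single[OF G zAn lc dn])
    also have "\<dots> \<le> EE k n G x" using insert.IH insert.prems by simp
    finally show ?case .
  qed
  have "EE k n G y = EE k n G (z ({1..n} \<times> {1..k}))"
    by (rule EE_local) (simp add: z_def)
  also have "\<dots> \<le> EE k n G x" by (rule main) auto
  finally show ?thesis .
qed

lemma deriv_affine: "deriv (\<lambda>t::real. C + t * D) a = D"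
proof (rule DERIV_imp_deriv)
  show "((\<lambda>t. C + t * D) has_field_derivative D) (at a)"
    by (auto intro!: derivative_eq_intros)
qed



lemma ksets_finite: "finite (ksets n k)"
proof -
  have "ksets n k = toS n k ` Asg n k" using toS_bij[of n k] by (simp add: bij_betw_def)
  then show ?thesis using Asg_finite by simp
qed

lemma toS_upd_preceq: "i \<in> {1..n} \<Longrightarrow> j \<in> {1..k} \<Longrightarrow> kpreceq k (toS n k (\<sigma>(i := 0))) (toS n k (\<sigma>(i := j)))"
  by (auto simp: kpreceq_def toS_def)

lemma kmeet_toS:
  assumes "\<tau> i = 0" "\<tau> l = 0" "i \<noteq> l" "j \<in> {1..k}" "c \<in> {1..k}"
  shows "kmeet (toS n k (\<tau>(i := j))) (toS n k (\<tau>(l := c))) = toS n k \<tau>"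
  using assms by (auto simp: kmeet_def toS_def fun_eq_iff)

lemma kjoin_toS:
  assumes "\<tau> i = 0" "\<tau> l = 0" "i \<noteq> l" "j \<in> {1..k}" "c \<in> {1..k}"
  shows "kjoin k (toS n k (\<tau>(i := j))) (toS n k (\<tau>(l := c))) = toS n k (\<tau>(i := j, l := c))"
proof (rule ext)
  fix j'
  show "kjoin k (toS n k (\<tau>(i := j))) (toS n k (\<tau>(l := c))) j' = toS n k (\<tau>(i := j, l := c)) j'"
  proof (cases "j' \<in> {1..k}")
    case False then show ?thesis unfolding kjoin_def toS_def by (simp only: if_not_P[OF False] if_False)
  next
    case True
    show ?thesis
    proof (rule set_eqI)
      fix p
      show "p \<in> kjoin k (toS n k (\<tau>(i := j))) (toS n k (\<tau>(l := c))) j' \<longleftrightarrow> p \<in> toS n k (\<tau>(i := j, l := c)) j'"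
        using assms True by (auto simp: kjoin_def toS_def)
    qed
  qed
qed

locale ks =
  fixes n k :: nat and f :: "(nat \<Rightarrow> nat set) \<Rightarrow> real"
  assumes fnn: "\<forall>S\<in>ksets n k. f S \<ge> 0"
    and fmono: "k_monotone n k f"
    and fsub: "k_submodular n k f"
begin

definition g where "g \<sigma> = f (toS n k \<sigma>)"
definition FF where "FF x = EE k n g x"
definition hD where "hD i j \<sigma> = g (\<sigma>(i := j)) - g (\<sigma>(i := 0))"
definition DD where "DD i j x = EE k n (hD i j) x"
definition M where "M = Max (f ` ksets n k)"

lemma g_nn: "g \<sigma> \<ge> 0" using fnn toS_ksets by (simp add: g_def)

lemma g_le_M: "g \<sigma> \<le> M"
  unfolding g_def M_def by (rule Max_ge) (use ksets_finite toS_ksets in auto)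

lemma hD_nn: "i \<in> {1..n} \<Longrightarrow> j \<in> {1..k} \<Longrightarrow> hD i j \<sigma> \<ge> 0"
  using fmono toS_upd_preceq[of i n j k \<sigma>] toS_ksets unfolding hD_def g_def k_monotone_def by auto

lemma hD_filling:
  assumes i: "i \<in> {1..n}" and j: "j \<in> {1..k}"
  shows "filling n k (hD i j)"
  unfolding filling_def
proof (intro allI impI)
  fix \<sigma> l c assume l: "l \<in> {1..n}" and c: "c \<in> {1..k}"
  show "hD i j (\<sigma>(l := c)) \<le> hD i j (\<sigma>(l := 0))"
  proof (cases "l = i")
    case True then show ?thesis by (simp add: hD_def)
  next
    case False
    define \<tau> where "\<tau> = \<sigma>(l := 0, i := 0)"
    have t: "\<tau> i = 0" "\<tau> l = 0" using False by (auto simp: \<tau>_def)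
    have e1: "(\<sigma>(l := c))(i := j) = \<tau>(i := j, l := c)" using False by (auto simp: \<tau>_def fun_eq_iff)
    have e2: "(\<sigma>(l := c))(i := 0) = \<tau>(l := c)" using False by (auto simp: \<tau>_def fun_eq_iff)
    have e3: "(\<sigma>(l := 0))(i := j) = \<tau>(i := j)" using False by (auto simp: \<tau>_def fun_eq_iff)
    have e4: "(\<sigma>(l := 0))(i := 0) = \<tau>" using False by (auto simp: \<tau>_def fun_eq_iff)
    have "f (toS n k (\<tau>(i := j))) + f (toS n k (\<tau>(l := c))) \<ge>
          f (kmeet (toS n k (\<tau>(i := j))) (toS n k (\<tau>(l := c)))) + f (kjoin k (toS n k (\<tau>(i := j))) (toS n k (\<tau>(l := c))))"
      using fsub toS_ksets unfolding k_submodular_def by blast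
    moreover have "kmeet (toS n k (\<tau>(i := j))) (toS n k (\<tau>(l := c))) = toS n k \<tau>"
      by (rule kmeet_toS) (use t False j c in auto)
    moreover have "kjoin k (toS n k (\<tau>(i := j))) (toS n k (\<tau>(l := c))) = toS n k (\<tau>(i := j, l := c))"
      by (rule kjoin_toS) (use t False j c in auto)
    ultimately have "f (toS n k (\<tau>(i := j))) + f (toS n k (\<tau>(l := c))) \<ge> f (toS n k \<tau>) + f (toS n k (\<tau>(i := j, l := c)))"
      by simp
    then show ?thesis unfolding hD_def g_def e1 e2 e3 e4 by simp
  qed
qed

lemma DD_nn: "i \<in> {1..n} \<Longrightarrow> j \<in> {1..k} \<Longrightarrow> nonneg k n x \<Longrightarrow> DD i j x \<ge> 0"
  unfolding DD_def using EE_mono[of k n x "\<lambda>_. 0" "hD i j"] hD_nn EE_const by auto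

lemma DD_le: "nonneg k n x \<Longrightarrow> DD i j x \<le> M"
proof -
  assume x: "nonneg k n x"
  have "DD i j x \<le> EE k n (\<lambda>_. M) x"
  proof (unfold DD_def, rule EE_mono[OF x])
    fix \<sigma> show "hD i j \<sigma> \<le> M" using g_le_M[of "\<sigma>(i:=j)"] g_nn[of "\<sigma>(i:=0)"] by (simp add: hD_def)
  qed
  then show ?thesis by (simp add: EE_const)
qed

lemma DD_anti:
  assumes "i \<in> {1..n}" "j \<in> {1..k}" "nonneg k n x" "nonneg k n y"
    "\<And>l c. l \<in> {1..n} \<Longrightarrow> c \<in> {1..k} \<Longrightarrow> x l c \<le> y l c"
  shows "DD i j y \<le> DD i j x"
  unfolding DD_def by (rule EE_antimono[OF hD_filling[OF assms(1,2)] assms(3-5)])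

lemma FF_diff: "i \<in> {1..n} \<Longrightarrow> FF (x(i := r)) - FF (x(i := r')) = (\<Sum>j=1..k. (r j - r' j) * DD i j x)"
  unfolding FF_def DD_def hD_def by (rule EE_affine_diff)

lemma partial_DD:
  assumes i: "i \<in> {1..n}" and j: "j \<in> {1..k}"
  shows "partial (multilinear_ext n k f) i j x = DD i j x"
proof -
  have ml: "multilinear_ext n k f = FF" unfolding FF_def g_def by (rule ext, rule ml_EE)
  define C where "C = FF (x(i := (\<lambda>_. 0))) + (\<Sum>j'\<in>{1..k} - {j}. x i j' * DD i j' x)"
  have "FF (x(i := (x i)(j := t))) = C + t * DD i j x" for t
  proof -
    have "FF (x(i := (x i)(j := t))) - FF (x(i := (\<lambda>_. 0))) = (\<Sum>j'=1..k. ((x i)(j := t)) j' * DD i j' x)"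
      using FF_diff[OF i, of x "(x i)(j := t)" "\<lambda>_. 0"] by simp
    also have "\<dots> = t * DD i j x + (\<Sum>j'\<in>{1..k} - {j}. x i j' * DD i j' x)"
      using j by (subst sum.remove[of _ j]) (auto intro!: sum.cong)
    finally show ?thesis unfolding C_def by simp
  qed
  then have "(\<lambda>t. FF (x(i := (x i)(j := t)))) = (\<lambda>t. C + t * DD i j x)" by (rule ext)
  then show ?thesis unfolding partial_def ml by (simp add: deriv_affine)
qed

end



context ks begin

lemma nonneg_H: "nonneg k n a \<Longrightarrow> nonneg k n b \<Longrightarrow> nonneg k n (\<lambda>i. if i \<le> m then b i else a i)"
  unfolding nonneg_def by auto

lemma hybrid:
  "FF b - FF a = (\<Sum>i<n. \<Sum>j=1..k. (b (Suc i) j - a (Suc i) j) * DD (Suc i) j (\<lambda>l. if l \<le> i then b l else a l))"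
proof -
  define H where "H m = (\<lambda>l. if l \<le> m then b l else a l)" for m
  have step: "FF (H (Suc i)) - FF (H i) = (\<Sum>j=1..k. (b (Suc i) j - a (Suc i) j) * DD (Suc i) j (H i))" if "i < n" for i
  proof -
    have e1: "H (Suc i) = (H i)(Suc i := b (Suc i))" by (auto simp: H_def fun_eq_iff)
    have e2: "H i = (H i)(Suc i := a (Suc i))" by (auto simp: H_def fun_eq_iff)
    have "FF ((H i)(Suc i := b (Suc i))) - FF ((H i)(Suc i := a (Suc i))) = (\<Sum>j=1..k. (b (Suc i) j - a (Suc i) j) * DD (Suc i) j (H i))"
      by (rule FF_diff) (use that in auto)
    then show ?thesis using e1 e2 by metis
  qed
  have "(\<Sum>i<n. FF (H (Suc i)) - FF (H i)) = FF (H n) - FF (H 0)" by (rule sum_lessThan_telescope)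
  moreover have "FF (H n) = FF b" unfolding FF_def by (rule EE_local) (auto simp: H_def)
  moreover have "FF (H 0) = FF a" unfolding FF_def by (rule EE_local) (auto simp: H_def)
  ultimately have "FF b - FF a = (\<Sum>i<n. FF (H (Suc i)) - FF (H i))" by simp
  also have "\<dots> = (\<Sum>i<n. \<Sum>j=1..k. (b (Suc i) j - a (Suc i) j) * DD (Suc i) j (H i))"
    by (rule sum.cong[OF refl]) (rule step, simp)
  finally show ?thesis unfolding H_def .
qed

lemma ks_ne: "ksets n k \<noteq> {}" using toS_ksets[of n k "\<lambda>_. 0"] by auto
lemma M_in: "M \<in> f ` ksets n k" unfolding M_def by (rule Max_in) (simp_all add: ksets_finite ks_ne)
lemma ks_img: "S \<in> ksets n k \<Longrightarrow> S \<in> toS n k ` Asg n k" using toS_bij[of n k] by (simp add: bij_betw_def)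
lemma M_ex: "\<exists>S. S \<in> ksets n k \<and> f S = M" using M_in by auto
lemma exists_opt: "\<exists>\<sigma>\<in>Asg n k. g \<sigma> = M"
proof -
  obtain S where S: "S \<in> ksets n k" "f S = M" using M_ex by blast
  obtain \<sigma> where "\<sigma> \<in> Asg n k" "S = toS n k \<sigma>" using ks_img[OF S(1)] by blast
  then show ?thesis using S(2) unfolding g_def by blast
qed

lemma FF_pt: "\<sigma> \<in> Asg n k \<Longrightarrow> FF (pt \<sigma>) = g \<sigma>"
proof -
  assume s: "\<sigma> \<in> Asg n k"
  have s1: "\<forall>l\<in>{1..n}. \<sigma> l \<in> {0..k}" and s2: "\<forall>l. l \<notin> {1..n} \<longrightarrow> \<sigma> l = 0"
    using s unfolding Asg_def by blast+
  have "FF (pt \<sigma>) = g (\<lambda>l. if l \<in> {1..n} then \<sigma> l else 0)"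
    unfolding FF_def by (rule EE_pt) (use s1 in blast)
  also have "(\<lambda>l. if l \<in> {1..n} then \<sigma> l else 0) = \<sigma>"
  proof
    fix l show "(if l \<in> {1..n} then \<sigma> l else 0) = \<sigma> l" using s2 by (cases "l \<in> {1..n}") auto
  qed
  finally show ?thesis .
qed

end

locale run = ks +
  fixes N :: nat and J :: "nat \<Rightarrow> nat \<Rightarrow> nat" and s :: "nat \<Rightarrow> nat \<Rightarrow> nat \<Rightarrow> real"
  assumes Npos: "N > 0" and gr: "greedy_run n k f N J s"
begin

lemma s0: "s 0 = (\<lambda>i j. 0)" using gr by (simp add: greedy_run_def)

lemma s_suc: "t < N \<Longrightarrow> s (Suc t) i j = s t i j + (1 / real N) * (if j = J t i then 1 else 0)"
  using gr by (simp add: greedy_run_def)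

lemma J_in: "t < N \<Longrightarrow> i \<in> {1..n} \<Longrightarrow> J t i \<in> {1..k}"
  using gr by (simp add: greedy_run_def)

lemma greedy: "t < N \<Longrightarrow> i \<in> {1..n} \<Longrightarrow> j \<in> {1..k} \<Longrightarrow> DD i j (s t) \<le> DD i (J t i) (s t)"
proof -
  assume a: "t < N" "i \<in> {1..n}" "j \<in> {1..k}"
  have "partial (multilinear_ext n k f) i j (s t) \<le> partial (multilinear_ext n k f) i (J t i) (s t)"
    using gr a by (simp add: greedy_run_def)
  then show ?thesis using partial_DD[OF a(2,3)] partial_DD[OF a(2) J_in[OF a(1,2)]] by simp
qed

lemma s_props: "t \<le> N \<Longrightarrow> (\<forall>i\<in>{1..n}. \<forall>j\<in>{1..k}. s t i j \<ge> 0) \<and> (\<forall>i\<in>{1..n}. (\<Sum>j=1..k. s t i j) = real t / real N)"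
proof (induction t)
  case 0 then show ?case by (simp add: s0)
next
  case (Suc t)
  then have t: "t < N" by simp
  have IH: "\<forall>i\<in>{1..n}. \<forall>j\<in>{1..k}. s t i j \<ge> 0" "\<forall>i\<in>{1..n}. (\<Sum>j=1..k. s t i j) = real t / real N"
    using Suc.IH t by auto
  have A: "\<forall>i\<in>{1..n}. \<forall>j\<in>{1..k}. s (Suc t) i j \<ge> 0" using IH(1) by (simp add: s_suc[OF t])
  have B: "(\<Sum>j=1..k. s (Suc t) i j) = real (Suc t) / real N" if i: "i \<in> {1..n}" for i
  proof -
    have "(\<Sum>j=1..k. s (Suc t) i j) = (\<Sum>j=1..k. s t i j) + (\<Sum>j=1..k. (1 / real N) * (if j = J t i then 1 else 0))"
      by (simp add: s_suc[OF t] sum.distrib)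
    also have "(\<Sum>j=1..k. (1 / real N) * (if j = J t i then 1 else 0)) = 1 / real N"
    proof -
      have "(\<Sum>j=1..k. (if j = J t i then (1::real) else 0)) = 1" using J_in[OF t i] by (simp add: sum.delta)
      then show ?thesis unfolding sum_distrib_left[symmetric] by simp
    qed
    finally show ?thesis using IH(2) i Npos by (simp add: add_divide_distrib)
  qed
  show ?case using A B by blast
qed

lemma s_nonneg: "t \<le> N \<Longrightarrow> nonneg k n (s t)"
proof -
  assume t: "t \<le> N"
  have "real t / real N \<le> 1" using t Npos by simp
  then show ?thesis using s_props[OF t] unfolding nonneg_iff by auto
qed

lemma s_mono: "t < N \<Longrightarrow> s t i j \<le> s (Suc t) i j"
  by (simp add: s_suc)


definition sO where "sO = (SOME \<sigma>. \<sigma> \<in> Asg n k \<and> g \<sigma> = M)"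

lemma sO: "sO \<in> Asg n k" "g sO = M"
proof -
  have "\<exists>\<sigma>. \<sigma> \<in> Asg n k \<and> g \<sigma> = M" using exists_opt by blast
  then have "sO \<in> Asg n k \<and> g sO = M" unfolding sO_def by (rule someI_ex)
  then show "sO \<in> Asg n k" "g sO = M" by auto
qed

lemma M_nn: "M \<ge> 0" using sO(2) g_nn by metis

definition ob where "ob t = (\<lambda>i j. s t i j + (1 - real t / real N) * pt sO i j)"

lemma pt_sum_mult: "(\<Sum>j=1..k. pt \<sigma> l j * D j) = (if \<sigma> l \<in> {1..k} then D (\<sigma> l) else 0)"
proof -
  have "(\<Sum>j=1..k. pt \<sigma> l j * D j) = (\<Sum>j=1..k. if \<sigma> l = j then D j else 0)"
    by (rule sum.cong) (auto simp: pt_def)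
  also have "\<dots> = (if \<sigma> l \<in> {1..k} then D (\<sigma> l) else 0)" by (simp add: sum.delta)
  finally show ?thesis .
qed

lemma pt_nn: "pt \<sigma> l j \<ge> 0" by (simp add: pt_def)

lemma pt_sum: "(\<Sum>j=1..k. pt \<sigma> l j) \<le> 1"
  using pt_sum_mult[of \<sigma> l "\<lambda>_. 1"] by simp

lemma ob_nonneg: "t \<le> N \<Longrightarrow> nonneg k n (ob t)"
proof -
  assume t: "t \<le> N"
  have c: "1 - real t / real N \<ge> 0" using t Npos by simp
  have sp: "\<forall>i\<in>{1..n}. \<forall>j\<in>{1..k}. s t i j \<ge> 0" "\<forall>i\<in>{1..n}. (\<Sum>j=1..k. s t i j) = real t / real N"
    using s_props[OF t] by auto
  show ?thesis unfolding nonneg_iff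
  proof
    fix l assume l: "l \<in> {1..n}"
    have "\<forall>c\<in>{1..k}. ob t l c \<ge> 0" using sp(1) l c pt_nn by (simp add: ob_def)
    moreover have "(\<Sum>j=1..k. ob t l j) \<le> 1"
    proof -
      have "(\<Sum>j=1..k. ob t l j) = (\<Sum>j=1..k. s t l j) + (1 - real t / real N) * (\<Sum>j=1..k. pt sO l j)"
        by (simp add: ob_def sum.distrib sum_distrib_left)
      also have "\<dots> \<le> real t / real N + (1 - real t / real N) * 1"
      proof -
        have "(1 - real t / real N) * (\<Sum>j=1..k. pt sO l j) \<le> (1 - real t / real N) * 1"
          by (rule mult_left_mono[OF pt_sum c])
        then show ?thesis using sp(2) l by simp
      qed
      finally show ?thesis by simp
    qed
    ultimately show "(\<forall>c\<in>{1..k}. ob t l c \<ge> 0) \<and> (\<Sum>j=1..k. ob t l j) \<le> 1" by blast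
  qed
qed

lemma s_le_ob: "t \<le> N \<Longrightarrow> s t l j \<le> ob t l j"
proof -
  assume t: "t \<le> N"
  have c: "1 - real t / real N \<ge> 0" using t Npos by simp
  show ?thesis unfolding ob_def using mult_nonneg_nonneg[OF c pt_nn] by simp
qed

lemma s_le_ob_suc: "t < N \<Longrightarrow> s t l j \<le> ob (Suc t) l j"
  using s_mono[of t l j] s_le_ob[of "Suc t" l j] by simp

lemma ob_diff: "t < N \<Longrightarrow> ob t l j - ob (Suc t) l j = (1 / real N) * pt sO l j - (1 / real N) * (if j = J t l then 1 else 0)"
proof -
  assume t: "t < N"
  have "real (Suc t) / real N = real t / real N + 1 / real N" by (simp add: add_divide_distrib)
  then show ?thesis unfolding ob_def s_suc[OF t] by (simp add: algebra_simps)
qed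

lemma stepA: "t < N \<Longrightarrow> (1 / real N) * (\<Sum>i<n. DD (Suc i) (J t (Suc i)) (s (Suc t))) \<le> FF (s (Suc t)) - FF (s t)"
proof -
  assume t: "t < N"
  define H where "H i = (\<lambda>l. if l \<le> i then s (Suc t) l else s t l)" for i
  have Hn: "nonneg k n (H i)" for i unfolding H_def
    by (rule nonneg_H) (use t s_nonneg in auto)
  have "(1 / real N) * (\<Sum>i<n. DD (Suc i) (J t (Suc i)) (s (Suc t)))
      = (\<Sum>i<n. (1 / real N) * DD (Suc i) (J t (Suc i)) (s (Suc t)))" by (simp add: sum_distrib_left)
  also have "\<dots> \<le> (\<Sum>i<n. \<Sum>j=1..k. (s (Suc t) (Suc i) j - s t (Suc i) j) * DD (Suc i) j (H i))"
  proof (rule sum_mono)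
    fix i assume i: "i \<in> {..<n}"
    have Ji: "J t (Suc i) \<in> {1..k}" using J_in[OF t] i by auto
    have "(\<Sum>j=1..k. (s (Suc t) (Suc i) j - s t (Suc i) j) * DD (Suc i) j (H i))
        = (\<Sum>j=1..k. if j = J t (Suc i) then (1 / real N) * DD (Suc i) j (H i) else 0)"
      by (rule sum.cong) (auto simp: s_suc[OF t])
    also have "\<dots> = (1 / real N) * DD (Suc i) (J t (Suc i)) (H i)" using Ji by (simp add: sum.delta')
    finally have e: "(\<Sum>j=1..k. (s (Suc t) (Suc i) j - s t (Suc i) j) * DD (Suc i) j (H i)) = (1 / real N) * DD (Suc i) (J t (Suc i)) (H i)" .
    have "DD (Suc i) (J t (Suc i)) (s (Suc t)) \<le> DD (Suc i) (J t (Suc i)) (H i)"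
    proof (rule DD_anti)
      show "Suc i \<in> {1..n}" using i by auto
      show "J t (Suc i) \<in> {1..k}" by (rule Ji)
      show "nonneg k n (H i)" by (rule Hn)
      show "nonneg k n (s (Suc t))" using t by (simp add: s_nonneg)
      fix l c show "H i l c \<le> s (Suc t) l c" using s_mono[OF t] by (simp add: H_def)
    qed
    then show "(1 / real N) * DD (Suc i) (J t (Suc i)) (s (Suc t)) \<le> (\<Sum>j=1..k. (s (Suc t) (Suc i) j - s t (Suc i) j) * DD (Suc i) j (H i))"
      unfolding e by (rule mult_left_mono) simp_all
  qed
  also have "\<dots> = FF (s (Suc t)) - FF (s t)" unfolding H_def by (rule hybrid[symmetric])
  finally show ?thesis .
qed

lemma stepB: "t < N \<Longrightarrow> FF (ob t) - FF (ob (Suc t)) \<le> (1 / real N) * (\<Sum>i<n. DD (Suc i) (J t (Suc i)) (s t))"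
proof -
  assume t: "t < N"
  define H where "H i = (\<lambda>l. if l \<le> i then ob t l else ob (Suc t) l)" for i
  have Hn: "nonneg k n (H i)" for i unfolding H_def
    by (rule nonneg_H) (use t ob_nonneg in auto)
  have sH: "s t l c \<le> H i l c" for i l c
    using s_le_ob[of t l c] s_le_ob_suc[OF t, of l c] t by (simp add: H_def)
  have "FF (ob t) - FF (ob (Suc t)) = (\<Sum>i<n. \<Sum>j=1..k. (ob t (Suc i) j - ob (Suc t) (Suc i) j) * DD (Suc i) j (H i))"
    unfolding H_def by (rule hybrid)
  also have "\<dots> \<le> (\<Sum>i<n. (1 / real N) * DD (Suc i) (J t (Suc i)) (s t))"
  proof (rule sum_mono)
    fix i assume i: "i \<in> {..<n}"
    have si: "Suc i \<in> {1..n}" using i by auto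
    have Ji: "J t (Suc i) \<in> {1..k}" using J_in[OF t si] .
    let ?D = "\<lambda>j. DD (Suc i) j (H i)"
    have dl: "(\<Sum>j=1..k. (if j = J t (Suc i) then ?D j else 0)) = ?D (J t (Suc i))"
      using Ji by (simp add: sum.delta)
    have "(\<Sum>j=1..k. (ob t (Suc i) j - ob (Suc t) (Suc i) j) * ?D j)
        = (\<Sum>j=1..k. (1 / real N) * (pt sO (Suc i) j * ?D j) - (1 / real N) * (if j = J t (Suc i) then ?D j else 0))"
      by (rule sum.cong) (auto simp: ob_diff[OF t] algebra_simps)
    also have "\<dots> = (1 / real N) * (\<Sum>j=1..k. pt sO (Suc i) j * ?D j) - (1 / real N) * (\<Sum>j=1..k. (if j = J t (Suc i) then ?D j else 0))"
      by (simp only: sum_subtractf sum_distrib_left)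
    also have "\<dots> = (1 / real N) * (\<Sum>j=1..k. pt sO (Suc i) j * ?D j) - (1 / real N) * ?D (J t (Suc i))"
      using dl by simp
    also have "\<dots> \<le> (1 / real N) * (\<Sum>j=1..k. pt sO (Suc i) j * ?D j)"
      using DD_nn[OF si Ji Hn] by simp
    also have "(\<Sum>j=1..k. pt sO (Suc i) j * ?D j) \<le> DD (Suc i) (J t (Suc i)) (s t)"
    proof (cases "sO (Suc i) \<in> {1..k}")
      case True
      have "?D (sO (Suc i)) \<le> DD (Suc i) (sO (Suc i)) (s t)"
        by (rule DD_anti[OF si True s_nonneg Hn]) (use t sH in auto)
      also have "\<dots> \<le> DD (Suc i) (J t (Suc i)) (s t)" by (rule greedy[OF t si True])
      finally show ?thesis unfolding pt_sum_mult using True by simp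
    next
      case False
      then show ?thesis unfolding pt_sum_mult if_not_P[OF False] using DD_nn[OF si Ji s_nonneg[of t]] t by simp
    qed
    then have "(1 / real N) * (\<Sum>j=1..k. pt sO (Suc i) j * ?D j) \<le> (1 / real N) * DD (Suc i) (J t (Suc i)) (s t)"
      by (rule mult_left_mono) simp
    finally show "(\<Sum>j=1..k. (ob t (Suc i) j - ob (Suc t) (Suc i) j) * ?D j) \<le> (1 / real N) * DD (Suc i) (J t (Suc i)) (s t)" .
  qed
  also have "\<dots> = (1 / real N) * (\<Sum>i<n. DD (Suc i) (J t (Suc i)) (s t))" by (simp add: sum_distrib_left)
  finally show ?thesis .
qed


lemma ob0: "ob 0 = pt sO" by (rule ext)+ (simp add: ob_def s0)

lemma obN: "ob N = s N" using Npos by (simp add: ob_def fun_eq_iff)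

lemma s0_pt: "s 0 = pt (\<lambda>_. 0)" by (rule ext)+ (auto simp: s0 pt_def)

lemma FF_s0: "FF (s 0) \<ge> 0"
proof -
  have "(\<lambda>_. 0) \<in> Asg n k" by (simp add: Asg_def)
  then have "FF (s 0) = g (\<lambda>_. 0)" unfolding s0_pt by (rule FF_pt)
  then show ?thesis using g_nn by simp
qed

lemma FF_ob0: "FF (ob 0) = M" unfolding ob0 using FF_pt[OF sO(1)] sO(2) by simp

lemma final: "FF (s N) \<ge> M / 2 - real n * real k * M / (2 * real N)"
proof -
  define A where "A = (\<Sum>t<N. \<Sum>i<n. DD (Suc i) (J t (Suc i)) (s (Suc t)))"
  define B where "B = (\<Sum>t<N. \<Sum>i<n. DD (Suc i) (J t (Suc i)) (s t))"
  have hA: "(1 / real N) * A \<le> FF (s N) - FF (s 0)"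
  proof -
    have "(1 / real N) * A = (\<Sum>t<N. (1 / real N) * (\<Sum>i<n. DD (Suc i) (J t (Suc i)) (s (Suc t))))"
      unfolding A_def by (simp add: sum_distrib_left)
    also have "\<dots> \<le> (\<Sum>t<N. FF (s (Suc t)) - FF (s t))" by (rule sum_mono) (rule stepA, simp)
    also have "\<dots> = FF (s N) - FF (s 0)" by (rule sum_lessThan_telescope)
    finally show ?thesis .
  qed
  have hB: "FF (ob 0) - FF (ob N) \<le> (1 / real N) * B"
  proof -
    have "FF (ob 0) - FF (ob N) = (\<Sum>t<N. FF (ob t) - FF (ob (Suc t)))" by (rule sum_lessThan_telescope'[symmetric])
    also have "\<dots> \<le> (\<Sum>t<N. (1 / real N) * (\<Sum>i<n. DD (Suc i) (J t (Suc i)) (s t)))" by (rule sum_mono) (rule stepB, simp)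
    also have "\<dots> = (1 / real N) * B" unfolding B_def by (simp add: sum_distrib_left)
    finally show ?thesis .
  qed
  have hE: "B - A \<le> real n * real k * M"
  proof -
    define Dl where "Dl t i j = DD (Suc i) j (s t) - DD (Suc i) j (s (Suc t))" for t i j
    have Dl_nn: "Dl t i j \<ge> 0" if "t < N" "i < n" "j \<in> {1..k}" for t i j
    proof -
      have "DD (Suc i) j (s (Suc t)) \<le> DD (Suc i) j (s t)"
        by (rule DD_anti) (use that s_nonneg s_mono in auto)
      then show ?thesis by (simp add: Dl_def)
    qed
    have "B - A = (\<Sum>t<N. \<Sum>i<n. Dl t i (J t (Suc i)))"
      unfolding A_def B_def Dl_def by (simp add: sum_subtractf)
    also have "\<dots> \<le> (\<Sum>t<N. \<Sum>i<n. \<Sum>j=1..k. Dl t i j)"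
    proof (rule sum_mono, rule sum_mono)
      fix t i assume t: "t \<in> {..<N}" and i: "i \<in> {..<n}"
      have Ji: "J t (Suc i) \<in> {1..k}" using J_in t i by auto
      show "Dl t i (J t (Suc i)) \<le> (\<Sum>j=1..k. Dl t i j)"
        by (rule member_le_sum[OF Ji]) (use Dl_nn t i in auto)
    qed
    also have "\<dots> = (\<Sum>i<n. \<Sum>j=1..k. \<Sum>t<N. Dl t i j)"
      by (simp only: sum.swap[of _ "{..<N}"] sum.swap[of _ "{..<N}" "{1..k}"])
    also have "\<dots> = (\<Sum>i<n. \<Sum>j=1..k. DD (Suc i) j (s 0) - DD (Suc i) j (s N))"
      unfolding Dl_def by (intro sum.cong refl) (rule sum_lessThan_telescope')
    also have "\<dots> \<le> (\<Sum>i<n. \<Sum>j=1..k. M)"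
    proof (rule sum_mono, rule sum_mono)
      fix i j assume i: "i \<in> {..<n}" and j: "j \<in> {1..k}"
      have "DD (Suc i) j (s 0) \<le> M" by (rule DD_le) (simp add: s_nonneg)
      moreover have "DD (Suc i) j (s N) \<ge> 0" by (rule DD_nn) (use i j s_nonneg in auto)
      ultimately show "DD (Suc i) j (s 0) - DD (Suc i) j (s N) \<le> M" by simp
    qed
    also have "\<dots> = real n * real k * M" by simp
    finally show ?thesis .
  qed
  have "(1 / real N) * (B - A) \<le> (1 / real N) * (real n * real k * M)"
    by (rule mult_left_mono[OF hE]) simp
  then have "M - FF (s N) \<le> FF (s N) - FF (s 0) + real n * real k * M / real N"
    using hA hB FF_ob0 obN FF_s0 by (simp add: right_diff_distrib)
  then show ?thesis using FF_s0 by (simp add: field_simps)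
qed


lemma main1: "s N \<in> polytopeP n k \<and> (\<forall>i\<in>{1..n}. (\<Sum>j=1..k. s N i j) = 1)"
proof -
  have sp: "\<forall>i\<in>{1..n}. \<forall>j\<in>{1..k}. s N i j \<ge> 0" "\<forall>i\<in>{1..n}. (\<Sum>j=1..k. s N i j) = real N / real N"
    using s_props[of N] by auto
  have sum1: "\<forall>i\<in>{1..n}. (\<Sum>j=1..k. s N i j) = 1" using sp(2) Npos by simp
  have le1: "s N i j \<le> 1" if "i \<in> {1..n}" "j \<in> {1..k}" for i j
  proof -
    have "s N i j \<le> (\<Sum>j=1..k. s N i j)"
      by (rule member_le_sum[OF that(2)]) (use sp(1) that(1) in auto)
    then show ?thesis using sum1 that(1) by simp
  qed
  show ?thesis unfolding polytopeP_def using sp(1) sum1 le1 by auto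
qed

lemma main2: "multilinear_ext n k f (s N) \<ge> Max (f ` ksets n k) / 2 - real n * real k * Max (f ` ksets n k) / (2 * real N)"
proof -
  have "multilinear_ext n k f (s N) = FF (s N)" unfolding FF_def g_def by (rule ml_EE)
  then show ?thesis using final unfolding M_def by simp
qed

lemma main3: "Max (f ` ksets n k) \<ge> 0" using M_nn unfolding M_def .

end

theorem mainTheorem6:
  fixes n k :: nat and f :: "(nat \<Rightarrow> nat set) \<Rightarrow> real"
  assumes "k \<ge> 2"
    and "\<forall>S\<in>ksets n k. f S \<ge> 0"
    and "k_monotone n k f"
    and "k_submodular n k f"
  shows "(\<forall>N J s. N > 0 \<longrightarrow> greedy_run n k f N J s \<longrightarrow>
            s N \<in> polytopeP n k \<and> (\<forall>i\<in>{1..n}. (\<Sum>j=1..k. s N i j) = 1))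
       \<and> (\<forall>\<epsilon>>0. \<exists>N0. \<forall>N\<ge>N0. \<forall>J s. N > 0 \<longrightarrow> greedy_run n k f N J s \<longrightarrow>
            multilinear_ext n k f (s N) \<ge> Max (f ` ksets n k) / 2 - \<epsilon>)"
proof -
  have K: "ks n k f" using assms(2-4) by (rule ks.intro)
  have R: "run n k f N J s" if "N > 0" "greedy_run n k f N J s" for N J s
    by (rule run.intro[OF K]) (rule run_axioms.intro[OF that])
  show ?thesis
  proof (intro conjI allI impI)
    fix N J s assume "N > 0" "greedy_run n k f N J s"
    then show "s N \<in> polytopeP n k" "\<forall>i\<in>{1..n}. (\<Sum>j=1..k. s N i j) = 1"
      using run.main1[OF R] by auto
  next
    fix \<epsilon> :: real assume e: "\<epsilon> > 0"
    define C where "C = real n * real k * Max (f ` ksets n k)"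
    define N0 where "N0 = nat \<lceil>C / (2 * \<epsilon>)\<rceil> + 1"
    show "\<exists>N0. \<forall>N\<ge>N0. \<forall>J s. N > 0 \<longrightarrow> greedy_run n k f N J s \<longrightarrow>
            multilinear_ext n k f (s N) \<ge> Max (f ` ksets n k) / 2 - \<epsilon>"
    proof (intro exI allI impI)
      fix N J s assume N: "N0 \<le> N" and Np: "N > 0" and g: "greedy_run n k f N J s"
      have m2: "multilinear_ext n k f (s N) \<ge> Max (f ` ksets n k) / 2 - C / (2 * real N)"
        using run.main2[OF R[OF Np g]] unfolding C_def by simp
      have "C / (2 * \<epsilon>) < real N"
      proof -
        have "C / (2 * \<epsilon>) \<le> real (nat \<lceil>C / (2 * \<epsilon>)\<rceil>)" by linarith
        also have "\<dots> < real N0" unfolding N0_def by simp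
        also have "\<dots> \<le> real N" using N by simp
        finally show ?thesis .
      qed
      then have "C < 2 * \<epsilon> * real N" using e by (simp add: field_simps)
      then have "C / (2 * real N) \<le> \<epsilon>" using Np by (simp add: field_simps)
      then show "multilinear_ext n k f (s N) \<ge> Max (f ` ksets n k) / 2 - \<epsilon>" using m2 by simp
    qed
  qed
qed

end
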